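(* Consider the protocol: for $t=1,\ldots,T$, the adversary reveals $\boldsymbol v_t\in\mathbb{R}^d$, the learner chooses $\boldsymbol w_t\in\mathbb{R}^d$ and predicts $\boldsymbol w_t^T\boldsymbol v_t$, the adversary reveals a loss $f_t(\boldsymbol w)=\ell_t(\boldsymbol w^T\boldsymbol v_t)$, and the learner suffers $\ell_t(\boldsymbol w_t^T\boldsymbol v_t)$. Let $B>0$ and $\mathcal{K}=\{\boldsymbol w\in\mathbb{R}^d:\ |\boldsymbol w^T\boldsymbol v_t|\le B\ \forall t\in[T]\}$. Suppose the $f_t$ are $\alpha$-exp-concave and $G$-Lipschitz, and the $\ell_t$ are Lipschitz smooth. Running FLH with learning rate $\zeta=\alpha$ and base learners $E^j$ being instances of the invariant Online Newton Step algorithm of Luo, Agarwal, Cesa-Bianchi and Langford (2016) started at time $j$ yields, for every comparator sequence $\boldsymbol z_1,\ldots,\boldsymbol z_T\in\mathcal{K}$, $$\sum_{t=1}^T\big(f_t(\boldsymbol w_t)-f_t(\boldsymbol z_t)\big)=\tilde O\big(d\sqrt{TV_T}\vee d^2\big),$$ where $V_T=\sum_{t=2}^T\|\boldsymbol z_t-\boldsymbol z_{t-1}\|$ and $\tilde O$ hides dependence on $G,\alpha$ and polylogarithmic factors of $T$.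
   Context: $f$ is $\alpha$-exp-concave if $f(\boldsymbol y)\ge f(\boldsymbol x)+(\boldsymbol y-\boldsymbol x)^T\nabla f(\boldsymbol x)+\frac\alpha2((\boldsymbol y-\boldsymbol x)^T\nabla f(\boldsymbol x))^2$; $G$-Lipschitz means $|f(\boldsymbol x)-f(\boldsymbol y)|\le G\|\boldsymbol x-\boldsymbol y\|$ (Euclidean norm). $a\vee b=\max\{a,b\}$. FLH with learning rate $\zeta$ and base learners $E^1,\ldots,E^T$: maintain a probability vector $v_t\in\mathbb{R}^t$ with $v_1^{(1)}=1$; at round $t$ let $x_t^{(j)}$ be the prediction of $E^j$ for $j\le t$ and play $x_t=\sum_{j=1}^t v_t^{(j)}x_t^{(j)}$; after observing $f_t$ set $\hat v_{t+1}^{(i)}=v_t^{(i)}e^{-\zeta f_t(x_t^{(i)})}/\sum_{j=1}^t v_t^{(j)}e^{-\zeta f_t(x_t^{(j)})}$ for $i\le t$, then $v_{t+1}^{(t+1)}=1/(t+1)$ and $v_{t+1}^{(i)}=(1-(t+1)^{-1})\hat v_{t+1}^{(i)}$ for $i\le t$. The invariant ONS base learner has static regret $O(d^2\log T)$ against $\mathcal{K}$ under these assumptions. *)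

theory Defs
  imports "HOL-Analysis.Analysis"
begin

text \<open>Vectors in R^d are represented as functions nat => real; only the
coordinates 0..d-1 are relevant.\<close>

definition dotd :: "nat \<Rightarrow> (nat \<Rightarrow> real) \<Rightarrow> (nat \<Rightarrow> real) \<Rightarrow> real" where
  "dotd d x y = (\<Sum>i<d. x i * y i)"

definition normd :: "nat \<Rightarrow> (nat \<Rightarrow> real) \<Rightarrow> real" where
  "normd d x = sqrt (\<Sum>i<d. (x i)\<^sup>2)"

definition exp_concave_on ::
  "nat \<Rightarrow> (nat \<Rightarrow> real) set \<Rightarrow> real \<Rightarrow> ((nat \<Rightarrow> real) \<Rightarrow> real)
     \<Rightarrow> ((nat \<Rightarrow> real) \<Rightarrow> (nat \<Rightarrow> real)) \<Rightarrow> bool" where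
  "exp_concave_on d S \<alpha> f gf \<longleftrightarrow>
     (\<forall>x\<in>S. \<forall>y\<in>S. f y \<ge> f x + dotd d (\<lambda>i. y i - x i) (gf x)
                        + \<alpha> / 2 * (dotd d (\<lambda>i. y i - x i) (gf x))\<^sup>2)"

definition lipschitz_on_d ::
  "nat \<Rightarrow> (nat \<Rightarrow> real) set \<Rightarrow> real \<Rightarrow> ((nat \<Rightarrow> real) \<Rightarrow> real) \<Rightarrow> bool" where
  "lipschitz_on_d d S G f \<longleftrightarrow>
     (\<forall>x\<in>S. \<forall>y\<in>S. \<bar>f x - f y\<bar> \<le> G * normd d (\<lambda>i. x i - y i))"

text \<open>FLH weights: flh_w zeta f x t j is v_t^(j) (rounds t >= 1, experts 1..t),
where f t is the loss of round t and x j t the prediction of expert E^j at round t.\<close>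
fun flh_w :: "real \<Rightarrow> (nat \<Rightarrow> 'a \<Rightarrow> real) \<Rightarrow> (nat \<Rightarrow> nat \<Rightarrow> 'a) \<Rightarrow> nat \<Rightarrow> nat \<Rightarrow> real" where
  "flh_w \<zeta> f x 0 = (\<lambda>i. 0)"
| "flh_w \<zeta> f x (Suc 0) = (\<lambda>i. if i = 1 then 1 else 0)"
| "flh_w \<zeta> f x (Suc (Suc t)) =
     (let w = flh_w \<zeta> f x (Suc t);
          Z = (\<Sum>j=1..Suc t. w j * exp (- \<zeta> * f (Suc t) (x j (Suc t))))
      in (\<lambda>i. if 1 \<le> i \<and> i \<le> Suc t
               then (1 - 1 / real (Suc (Suc t))) * (w i * exp (- \<zeta> * f (Suc t) (x i (Suc t))) / Z)
               else if i = Suc (Suc t) then 1 / real (Suc (Suc t)) else 0))"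

definition flh_play ::
  "real \<Rightarrow> (nat \<Rightarrow> (nat \<Rightarrow> real) \<Rightarrow> real) \<Rightarrow> (nat \<Rightarrow> nat \<Rightarrow> (nat \<Rightarrow> real)) \<Rightarrow> nat \<Rightarrow> (nat \<Rightarrow> real)" where
  "flh_play \<zeta> f x t = (\<lambda>k. \<Sum>j=1..t. flh_w \<zeta> f x t j * x j t k)"

end

theory Submission
  imports Defs
begin




lemma flh_step:
  assumes "t \<ge> 1" "1 \<le> i" "i \<le> t"
  shows "flh_w \<zeta> f x (Suc t) i = (1 - 1 / real (Suc t)) *
           (flh_w \<zeta> f x t i * exp (- \<zeta> * f t (x i t)) /
            (\<Sum>j=1..t. flh_w \<zeta> f x t j * exp (- \<zeta> * f t (x j t))))"
proof -
  obtain t0 where t: "t = Suc t0" using assms(1) by (cases t) auto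
  show ?thesis using assms unfolding t by (simp add: Let_def)
qed

lemma flh_new:
  assumes "t \<ge> 1"
  shows "flh_w \<zeta> f x t t = 1 / real t"
proof -
  consider "t = Suc 0" | t0 where "t = Suc (Suc t0)" using assms by (cases t; cases "t - 1") auto
  thus ?thesis by cases (auto simp: Let_def)
qed

lemma flh_basic:
  assumes "t \<ge> 1"
  shows "(\<forall>j\<in>{1..t}. flh_w \<zeta> f x t j > 0) \<and> (\<Sum>j=1..t. flh_w \<zeta> f x t j) = 1"
  using assms
proof (induction t rule: nat_induct_at_least)
  case base
  thus ?case by simp
next
  case (Suc t)
  define e where "e = (\<lambda>j. exp (- \<zeta> * f t (x j t)))"
  define Z where "Z = (\<Sum>j=1..t. flh_w \<zeta> f x t j * e j)"
  have e0: "e j > 0" for j by (simp add: e_def)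
  have Z0: "Z > 0" unfolding Z_def
    using Suc.IH Suc.hyps e0 by (intro sum_pos) auto
  have st: "flh_w \<zeta> f x (Suc t) i = (1 - 1 / real (Suc t)) * (flh_w \<zeta> f x t i * e i / Z)"
    if "1 \<le> i" "i \<le> t" for i
    using flh_step[OF Suc.hyps that] unfolding e_def Z_def by simp
  have new: "flh_w \<zeta> f x (Suc t) (Suc t) = 1 / real (Suc t)" by (rule flh_new) simp
  have c: "1 - 1 / real (Suc t) > 0" using Suc.hyps by (simp add: field_simps)
  have pos: "\<forall>j\<in>{1..Suc t}. flh_w \<zeta> f x (Suc t) j > 0"
  proof
    fix j assume j: "j \<in> {1..Suc t}"
    show "flh_w \<zeta> f x (Suc t) j > 0"
    proof (cases "j = Suc t")
      case True thus ?thesis using new by simp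
    next
      case False
      hence "1 \<le> j" "j \<le> t" using j by auto
      thus ?thesis using st[of j] Suc.IH c e0[of j] Z0 by auto
    qed
  qed
  have "(\<Sum>j=1..Suc t. flh_w \<zeta> f x (Suc t) j) = (\<Sum>j=1..t. flh_w \<zeta> f x (Suc t) j) + 1 / real (Suc t)"
    using new by simp
  also have "(\<Sum>j=1..t. flh_w \<zeta> f x (Suc t) j) = (\<Sum>j=1..t. (1 - 1 / real (Suc t)) * (flh_w \<zeta> f x t j * e j / Z))"
    by (rule sum.cong) (auto simp: st)
  also have "\<dots> = (1 - 1 / real (Suc t)) * ((\<Sum>j=1..t. flh_w \<zeta> f x t j * e j) / Z)"
    by (simp add: sum_distrib_left sum_divide_distrib)
  also have "\<dots> = 1 - 1 / real (Suc t)" using Z0 by (simp add: Z_def)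
  finally show ?case using pos by simp
qed

lemma flh_regret:
  fixes f :: "nat \<Rightarrow> 'a \<Rightarrow> real" and x :: "nat \<Rightarrow> nat \<Rightarrow> 'a" and l :: "nat \<Rightarrow> real"
  assumes z0: "\<zeta> > 0"
    and mix: "\<And>t. t \<in> {1..T} \<Longrightarrow> (\<Sum>j=1..t. flh_w \<zeta> f x t j * exp (- \<zeta> * f t (x j t))) \<le> exp (- \<zeta> * l t)"
    and jr: "1 \<le> j" "j \<le> r" "r \<le> T"
  shows "\<zeta> * (\<Sum>t=j..r. l t - f t (x j t)) \<le> ln (real r + 1)"
proof -
  have claim: "\<zeta> * (\<Sum>t\<in>{j..<j+n}. l t - f t (x j t)) \<le> ln (flh_w \<zeta> f x (j+n) j) + ln (real (j+n))"
    if "j + n \<le> T + 1" for n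
    using that
  proof (induction n)
    case 0
    have "flh_w \<zeta> f x j j = 1 / real j" by (rule flh_new) (use jr in simp)
    thus ?case using jr by (simp add: ln_div)
  next
    case (Suc n)
    define t where "t = j + n"
    have t1: "t \<ge> 1" and tT: "t \<in> {1..T}" using Suc.prems jr by (auto simp: t_def)
    have jt: "1 \<le> j" "j \<le> t" using jr by (auto simp: t_def)
    define e where "e = (\<lambda>i. exp (- \<zeta> * f t (x i t)))"
    define Z where "Z = (\<Sum>i=1..t. flh_w \<zeta> f x t i * e i)"
    have basic: "\<forall>i\<in>{1..t}. flh_w \<zeta> f x t i > 0" using flh_basic[OF t1] by blast
    have Z0: "Z > 0" unfolding Z_def using basic t1 by (intro sum_pos) (auto simp: e_def)
    have ZL: "Z \<le> exp (- \<zeta> * l t)" using mix[OF tT] by (simp add: Z_def e_def)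
    have wt: "flh_w \<zeta> f x t j > 0" using basic jt by auto
    have st: "flh_w \<zeta> f x (Suc t) j = (real t / real (Suc t)) * (flh_w \<zeta> f x t j * e j / Z)"
    proof -
      have "1 - 1 / real (Suc t) = real t / real (Suc t)" by (simp add: field_simps)
      thus ?thesis using flh_step[OF t1 jt] unfolding e_def Z_def by simp
    qed
    have ln_st: "ln (flh_w \<zeta> f x (Suc t) j) = ln (real t) - ln (real (Suc t)) + ln (flh_w \<zeta> f x t j) + ln (e j) - ln Z"
      unfolding st using t1 wt Z0 by (simp add: ln_mult ln_div e_def)
    have lnZ: "ln Z \<le> - \<zeta> * l t" using ZL Z0 by (metis ln_exp ln_le_cancel_iff exp_gt_zero)
    have "\<zeta> * (\<Sum>t\<in>{j..<j+Suc n}. l t - f t (x j t)) = \<zeta> * (\<Sum>t\<in>{j..<j+n}. l t - f t (x j t)) + \<zeta> * (l t - f t (x j t))"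
      by (simp add: t_def distrib_left)
    also have "\<dots> \<le> ln (flh_w \<zeta> f x t j) + ln (real t) + \<zeta> * (l t - f t (x j t))"
      using Suc.IH Suc.prems by (simp add: t_def)
    also have "\<dots> \<le> ln (flh_w \<zeta> f x (Suc t) j) + ln (real (Suc t))"
      using ln_st lnZ by (simp add: e_def algebra_simps)
    finally show ?case by (simp add: t_def)
  qed
  have c: "\<zeta> * (\<Sum>t\<in>{j..<j+(r+1-j)}. l t - f t (x j t)) \<le> ln (flh_w \<zeta> f x (j+(r+1-j)) j) + ln (real (j+(r+1-j)))"
    by (rule claim) (use jr in simp)
  have e1: "j + (r + 1 - j) = Suc r" using jr by simp
  have r1: "Suc r \<ge> 1" by simp
  have b: "(\<forall>i\<in>{1..Suc r}. flh_w \<zeta> f x (Suc r) i > 0) \<and> (\<Sum>i=1..Suc r. flh_w \<zeta> f x (Suc r) i) = 1"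
    by (rule flh_basic[OF r1])
  have wpos: "flh_w \<zeta> f x (Suc r) j > 0" using b jr by auto
  have "flh_w \<zeta> f x (Suc r) j \<le> (\<Sum>i=1..Suc r. flh_w \<zeta> f x (Suc r) i)"
  proof (rule member_le_sum)
    show "j \<in> {1..Suc r}" using jr by auto
    show "0 \<le> flh_w \<zeta> f x (Suc r) i" if "i \<in> {1..Suc r} - {j}" for i
      using b that by (meson DiffD1 less_imp_le)
  qed simp
  hence "flh_w \<zeta> f x (Suc r) j \<le> 1" using b by simp
  hence "ln (flh_w \<zeta> f x (Suc r) j) \<le> 0" using wpos by simp
  moreover have "{j..<Suc r} = {j..r}" by auto
  ultimately show ?thesis using c unfolding e1 by (simp add: add.commute)
qed



lemma mono_from_local:
  fixes g :: "real \<Rightarrow> real"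
  assumes K: "K \<ge> 0"
    and loc: "\<And>s s'. a \<le> s \<Longrightarrow> s \<le> s' \<Longrightarrow> s' \<le> b \<Longrightarrow> g s' - g s \<ge> - K * (s' - s)^2"
    and st: "a \<le> s" "s \<le> s'" "s' \<le> b"
  shows "g s \<le> g s'"
proof (rule ccontr)
  assume "\<not> g s \<le> g s'"
  hence gap: "g s - g s' > 0" by simp
  define \<Delta> where "\<Delta> = s' - s"
  have D0: "\<Delta> \<ge> 0" using st by (simp add: \<Delta>_def)
  obtain n :: nat where n: "real n > K * \<Delta>^2 / (g s - g s')" using reals_Archimedean2 by blast
  have n1: "n \<ge> 1"
  proof -
    have "K * \<Delta>^2 / (g s - g s') \<ge> 0" using K gap by simp
    thus ?thesis using n by (cases n) auto
  qed
  define p where "p = (\<lambda>k::nat. s + real k * \<Delta> / real n)"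
  have p0: "p 0 = s" and pn: "p n = s'" using n1 by (auto simp: p_def \<Delta>_def)
  have pmono: "p k \<le> p (Suc k)" for k using D0 n1 by (simp add: p_def divide_right_mono distrib_right add_divide_distrib)
  have prange: "a \<le> p k \<and> p k \<le> b" if "k \<le> n" for k
  proof -
    have "real k * \<Delta> / real n \<le> \<Delta>"
      using that D0 n1 by (simp add: divide_le_eq mult_left_mono mult.commute)
    moreover have "real k * \<Delta> / real n \<ge> 0" using D0 by simp
    ultimately show ?thesis using st unfolding p_def \<Delta>_def by linarith
  qed
  have step: "g (p (Suc k)) - g (p k) \<ge> - K * (\<Delta> / real n)^2" if "k < n" for k
  proof -
    have "p (Suc k) - p k = \<Delta> / real n" by (simp add: p_def distrib_right add_divide_distrib)
    thus ?thesis using loc[of "p k" "p (Suc k)"] prange[of k] prange[of "Suc k"] pmono[of k] that by simp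
  qed
  have "g s' - g s = (\<Sum>k<n. g (p (Suc k)) - g (p k))"
    using sum_lessThan_telescope[of "\<lambda>k. g (p k)" n] by (simp add: p0 pn)
  also have "\<dots> \<ge> (\<Sum>k<n. - K * (\<Delta> / real n)^2)"
    by (rule sum_mono) (use step in auto)
  finally have "g s' - g s \<ge> - real n * K * (\<Delta> / real n)^2" by simp
  hence "g s - g s' \<le> K * \<Delta>^2 / real n"
    using n1 by (simp add: power_divide power2_eq_square field_simps)
  hence "real n * (g s - g s') \<le> K * \<Delta>^2" using n1 by (simp add: field_simps)
  moreover have "real n * (g s - g s') > K * \<Delta>^2" using n gap by (simp add: field_simps)
  ultimately show False by simp
qed


lemma local_g:
  fixes \<phi> \<phi>' :: "real \<Rightarrow> real" and \<alpha> L M H B s s' :: real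
  assumes a0: "\<alpha> > 0" and L0: "L \<ge> 0" and M0: "M \<ge> 0" and H0: "H \<ge> 0"
    and Mb: "\<And>x. x \<in> {-B..B} \<Longrightarrow> \<bar>\<phi>' x\<bar> \<le> M"
    and Hb: "\<And>x. x \<in> {-B..B} \<Longrightarrow> exp (- \<alpha> * \<phi> x) \<le> H"
    and lip: "\<And>s r. \<bar>\<phi>' s - \<phi>' r\<bar> \<le> L * \<bar>s - r\<bar>"
    and cond: "\<And>s s'. s \<in> {-B..B} \<Longrightarrow> s' \<in> {-B..B} \<Longrightarrow>
                  \<phi> s' \<ge> \<phi> s + \<phi>' s * (s' - s) + \<alpha> / 2 * (\<phi>' s * (s' - s))^2"
    and s: "s \<in> {-B..B}" and s': "s' \<in> {-B..B}" and ss: "s \<le> s'"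
  shows "\<phi>' s' * exp (- \<alpha> * \<phi> s') - \<phi>' s * exp (- \<alpha> * \<phi> s) \<ge> - (H * \<alpha> * L * M) * (s' - s)^2"
proof -
  define \<Delta> where "\<Delta> = s' - s"
  define p where "p = \<phi>' s"
  define q where "q = \<phi>' s'"
  define D where "D = \<phi> s' - \<phi> s"
  have c1: "D \<ge> p * \<Delta> + \<alpha> / 2 * (p * \<Delta>)^2" using cond[OF s s'] by (simp add: D_def p_def \<Delta>_def)
  have c2': "\<phi> s \<ge> \<phi> s' + q * (s - s') + \<alpha> / 2 * (q * (s - s'))^2" using cond[OF s' s] by (simp add: q_def)
  have c2: "D \<le> q * \<Delta> - \<alpha> / 2 * (q * \<Delta>)^2"
  proof -
    have "(q * (s - s'))^2 = (q * \<Delta>)^2" by (simp add: \<Delta>_def power2_eq_square algebra_simps)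
    thus ?thesis using c2' by (simp add: D_def \<Delta>_def algebra_simps)
  qed
  show ?thesis
  proof (cases "\<Delta> = 0")
    case True
    hence "s' = s" by (simp add: \<Delta>_def)
    thus ?thesis by simp
  next
    case False
    hence Dp: "\<Delta> > 0" using ss by (simp add: \<Delta>_def)
    have pq: "p * \<Delta> \<le> q * \<Delta> - \<alpha> / 2 * (p^2 + q^2) * \<Delta>^2"
      using c1 c2 by (simp add: power_mult_distrib algebra_simps)
    have sq0: "\<alpha> / 2 * (p^2 + q^2) * \<Delta>^2 \<ge> 0" using a0 by simp
    have ple: "p \<le> q"
    proof -
      have "p * \<Delta> \<le> q * \<Delta>" using pq sq0 by linarith
      thus ?thesis using Dp by simp
    qed
    have lpq: "\<bar>p - q\<bar> \<le> L * \<Delta>" using lip[of s s'] ss by (simp add: p_def q_def \<Delta>_def abs_minus_commute)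
    have spq: "\<bar>p + q\<bar> \<le> 2 * M" using Mb[OF s] Mb[OF s'] by (simp add: p_def q_def)
    have p2q2: "\<bar>p^2 - q^2\<bar> \<le> 2 * L * M * \<Delta>"
    proof -
      have "\<bar>p^2 - q^2\<bar> = \<bar>p - q\<bar> * \<bar>p + q\<bar>" by (simp add: power2_eq_square abs_mult[symmetric] algebra_simps)
      also have "\<dots> \<le> (L * \<Delta>) * (2 * M)" by (rule mult_mono[OF lpq spq]) (use L0 Dp in auto)
      finally show ?thesis by (simp add: algebra_simps)
    qed
    have key3: "\<alpha> * \<Delta>^2 * (p^2 - q^2) / 2 \<ge> - (\<alpha> * L * M * \<Delta>^3)"
    proof -
      have "p^2 - q^2 \<ge> - (2 * L * M * \<Delta>)" using p2q2 by linarith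
      hence "\<alpha> * \<Delta>^2 * (p^2 - q^2) \<ge> \<alpha> * \<Delta>^2 * (- (2 * L * M * \<Delta>))"
        by (rule mult_left_mono) (use a0 in simp)
      thus ?thesis by (simp add: power3_eq_cube power2_eq_square algebra_simps)
    qed
    have key3': "\<alpha> * \<Delta>^2 * (q^2 - p^2) / 2 \<ge> - (\<alpha> * L * M * \<Delta>^3)"
    proof -
      have "q^2 - p^2 \<ge> - (2 * L * M * \<Delta>)" using p2q2 by linarith
      hence "\<alpha> * \<Delta>^2 * (q^2 - p^2) \<ge> \<alpha> * \<Delta>^2 * (- (2 * L * M * \<Delta>))"
        by (rule mult_left_mono) (use a0 in simp)
      thus ?thesis by (simp add: power3_eq_cube power2_eq_square algebra_simps)
    qed
    have es: "exp (- \<alpha> * \<phi> s') = exp (- \<alpha> * \<phi> s) * exp (- \<alpha> * D)"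
      unfolding mult_exp_exp D_def by (simp add: algebra_simps)
    have fin: "e * X \<ge> - (H * \<alpha> * L * M) * \<Delta>^2"
      if e0: "0 < e" "e \<le> H" and X: "X * \<Delta> \<ge> - (\<alpha> * L * M * \<Delta>^3)" for e X
    proof -
      have X': "X \<ge> - (\<alpha> * L * M * \<Delta>^2)"
      proof -
        have "X * \<Delta> \<ge> (- (\<alpha> * L * M * \<Delta>^2)) * \<Delta>" using X by (simp add: power3_eq_cube power2_eq_square)
        thus ?thesis using Dp mult_le_cancel_right_pos by blast
      qed
      have nn: "\<alpha> * L * M * \<Delta>^2 \<ge> 0" using a0 L0 M0 by simp
      have "e * X \<ge> e * (- (\<alpha> * L * M * \<Delta>^2))" by (rule mult_left_mono[OF X']) (use e0 in simp)
      also have "e * (- (\<alpha> * L * M * \<Delta>^2)) \<ge> H * (- (\<alpha> * L * M * \<Delta>^2))"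
        using mult_right_mono[OF e0(2) nn] by simp
      finally show ?thesis by simp
    qed
    show ?thesis
    proof (cases "q \<ge> 0")
      case True
      have e1: "exp (- \<alpha> * D) \<ge> 1 - \<alpha> * D" using exp_ge_add_one_self[of "- \<alpha> * D"] by simp
      have "q * exp (- \<alpha> * D) \<ge> q * (1 - \<alpha> * D)" by (rule mult_left_mono[OF e1 True])
      moreover have "q * (1 - \<alpha> * D) \<ge> q * (1 - \<alpha> * (q * \<Delta> - \<alpha> / 2 * (q * \<Delta>)^2))"
        by (rule mult_left_mono) (use c2 a0 True in auto)
      moreover have "q * (1 - \<alpha> * (q * \<Delta> - \<alpha> / 2 * (q * \<Delta>)^2)) \<ge> q - \<alpha> * q^2 * \<Delta>"
      proof -
        have "q * (\<alpha> * (\<alpha> / 2 * (q * \<Delta>)^2)) \<ge> 0" using True a0 by simp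
        thus ?thesis by (simp add: algebra_simps power2_eq_square)
      qed
      ultimately have qe: "q * exp (- \<alpha> * D) \<ge> q - \<alpha> * q^2 * \<Delta>" by linarith
      have X: "(q * exp (- \<alpha> * D) - p) * \<Delta> \<ge> - (\<alpha> * L * M * \<Delta>^3)"
      proof -
        have "(q * exp (- \<alpha> * D) - p) * \<Delta> \<ge> (q - \<alpha> * q^2 * \<Delta> - p) * \<Delta>"
          using qe Dp by (simp add: mult_right_mono)
        moreover have "(q - \<alpha> * q^2 * \<Delta> - p) * \<Delta> \<ge> \<alpha> * \<Delta>^2 * (p^2 - q^2) / 2"
          using pq unfolding power2_eq_square by (simp add: field_simps)
        ultimately show ?thesis using key3 by linarith
      qed
      have "\<phi>' s' * exp (- \<alpha> * \<phi> s') - \<phi>' s * exp (- \<alpha> * \<phi> s)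
            = exp (- \<alpha> * \<phi> s) * (q * exp (- \<alpha> * D) - p)"
        unfolding es p_def q_def by (simp add: algebra_simps)
      also have "\<dots> \<ge> - (H * \<alpha> * L * M) * \<Delta>^2"
        by (rule fin[OF _ Hb[OF s] X]) simp
      finally show ?thesis by (simp add: \<Delta>_def)
    next
      case False
      hence q0: "q < 0" by simp
      hence p0: "p < 0" using ple by simp
      have e1: "exp (\<alpha> * D) \<ge> 1 + \<alpha> * D" using exp_ge_add_one_self[of "\<alpha> * D"] by simp
      have "- p * exp (\<alpha> * D) \<ge> - p * (1 + \<alpha> * D)" by (rule mult_left_mono[OF e1]) (use p0 in simp)
      moreover have "- p * (1 + \<alpha> * D) \<ge> - p * (1 + \<alpha> * (p * \<Delta> + \<alpha> / 2 * (p * \<Delta>)^2))"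
        by (rule mult_left_mono) (use c1 a0 p0 in auto)
      moreover have "- p * (1 + \<alpha> * (p * \<Delta> + \<alpha> / 2 * (p * \<Delta>)^2)) \<ge> - p - \<alpha> * p^2 * \<Delta>"
      proof -
        have "- p * (\<alpha> * (\<alpha> / 2 * (p * \<Delta>)^2)) \<ge> 0" using p0 a0 by (intro mult_nonneg_nonneg) auto
        thus ?thesis by (simp add: algebra_simps power2_eq_square)
      qed
      ultimately have pe: "- p * exp (\<alpha> * D) \<ge> - p - \<alpha> * p^2 * \<Delta>" by linarith
      have X: "(q - p * exp (\<alpha> * D)) * \<Delta> \<ge> - (\<alpha> * L * M * \<Delta>^3)"
      proof -
        have "(q - p * exp (\<alpha> * D)) * \<Delta> \<ge> (q - p - \<alpha> * p^2 * \<Delta>) * \<Delta>"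
          using pe Dp by (simp add: mult_right_mono)
        moreover have "(q - p - \<alpha> * p^2 * \<Delta>) * \<Delta> \<ge> \<alpha> * \<Delta>^2 * (q^2 - p^2) / 2"
          using pq unfolding power2_eq_square by (simp add: field_simps)
        ultimately show ?thesis using key3' by linarith
      qed
      have es2: "exp (- \<alpha> * \<phi> s) = exp (- \<alpha> * \<phi> s') * exp (\<alpha> * D)"
        unfolding mult_exp_exp D_def by (simp add: algebra_simps)
      have "\<phi>' s' * exp (- \<alpha> * \<phi> s') - \<phi>' s * exp (- \<alpha> * \<phi> s)
            = exp (- \<alpha> * \<phi> s') * (q - p * exp (\<alpha> * D))"
        unfolding es2 p_def q_def by (simp add: algebra_simps)
      also have "\<dots> \<ge> - (H * \<alpha> * L * M) * \<Delta>^2"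
        by (rule fin[OF _ Hb[OF s'] X]) simp
      finally show ?thesis by (simp add: \<Delta>_def)
    qed
  qed
qed


lemma concave_exp:
  fixes \<phi> \<phi>' :: "real \<Rightarrow> real" and \<alpha> L B :: real
  assumes a0: "\<alpha> > 0" and L0: "L \<ge> 0" and B0: "B \<ge> 0"
    and der: "\<And>s. (\<phi> has_real_derivative \<phi>' s) (at s)"
    and lip: "\<And>s r. \<bar>\<phi>' s - \<phi>' r\<bar> \<le> L * \<bar>s - r\<bar>"
    and cond: "\<And>s s'. s \<in> {-B..B} \<Longrightarrow> s' \<in> {-B..B} \<Longrightarrow>
                  \<phi> s' \<ge> \<phi> s + \<phi>' s * (s' - s) + \<alpha> / 2 * (\<phi>' s * (s' - s))^2"
  shows "convex_on {-B..B} (\<lambda>s. - exp (- \<alpha> * \<phi> s))"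
proof -
  define M where "M = \<bar>\<phi>' 0\<bar> + L * B"
  define H where "H = exp (- \<alpha> * \<phi> 0 + 1/2)"
  have M0: "M \<ge> 0" using L0 B0 by (simp add: M_def)
  have H0: "H \<ge> 0" by (simp add: H_def)
  have Mb: "\<bar>\<phi>' x\<bar> \<le> M" if "x \<in> {-B..B}" for x
  proof -
    have "\<bar>\<phi>' x - \<phi>' 0\<bar> \<le> L * \<bar>x - 0\<bar>" by (rule lip)
    moreover have "L * \<bar>x\<bar> \<le> L * B" using that L0 by (intro mult_left_mono) auto
    ultimately show ?thesis unfolding M_def by simp
  qed
  have Hb: "exp (- \<alpha> * \<phi> x) \<le> H" if "x \<in> {-B..B}" for x
  proof -
    define a where "a = \<phi>' 0 * (x - 0)"
    have 0: "0 \<in> {-B..B}" using B0 by simp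
    have c: "\<phi> x \<ge> \<phi> 0 + a + \<alpha> / 2 * a^2" using cond[OF 0 that] by (simp add: a_def)
    have "\<alpha> / 2 * a^2 + a + 1 / (2 * \<alpha>) = (\<alpha> * a + 1)^2 / (2 * \<alpha>)"
      using a0 by (simp add: field_simps power2_eq_square)
    also have "\<dots> \<ge> 0" using a0 by simp
    finally have "\<phi> x \<ge> \<phi> 0 - 1 / (2 * \<alpha>)" using c by linarith
    hence "\<alpha> * \<phi> x \<ge> \<alpha> * (\<phi> 0 - 1 / (2 * \<alpha>))" using a0 by (intro mult_left_mono) auto
    hence "- \<alpha> * \<phi> x \<le> - \<alpha> * \<phi> 0 + 1/2" using a0 by (simp add: algebra_simps)
    thus ?thesis unfolding H_def by simp
  qed
  define g where "g = (\<lambda>s. \<phi>' s * exp (- \<alpha> * \<phi> s))"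
  have loc: "g y' - g y \<ge> - (H * \<alpha> * L * M) * (y' - y)^2" if yy: "-B \<le> y" "y \<le> y'" "y' \<le> B" for y y'
  proof -
    have "y \<in> {-B..B}" "y' \<in> {-B..B}" using yy by auto
    from local_g[OF a0 L0 M0 H0 Mb Hb lip cond this yy(2)]
    show ?thesis unfolding g_def by simp
  qed
  have K0: "0 \<le> H * \<alpha> * L * M" using H0 a0 L0 M0 by simp
  have gm: "g s \<le> g s'" if "s \<in> {-B..B}" "s' \<in> {-B..B}" "s \<le> s'" for s s'
    using mono_from_local[OF K0 loc, of s s'] that by auto
  show ?thesis
  proof (rule convex_on_realI[where f' = "\<lambda>s. \<alpha> * g s"])
    show "connected {-B..B}" by simp
    show "((\<lambda>s. - exp (- \<alpha> * \<phi> s)) has_real_derivative \<alpha> * g s) (at s)" for s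
      unfolding g_def
      by (rule derivative_eq_intros der refl | simp)+
    show "\<alpha> * g x \<le> \<alpha> * g y" if "x \<in> {-B..B}" "y \<in> {-B..B}" "x \<le> y" for x y
      using gm[OF that] a0 by simp
  qed
qed



lemma final_arith:
  fixes total R A \<Lambda> \<beta> G V \<alpha> d :: real and T :: nat
  assumes a0: "\<alpha> > 0" and G0: "G > 0" and b0: "\<beta> > 0" and L1: "\<Lambda> \<ge> 1" and d1: "d \<ge> 1"
    and T1: "T \<ge> 1" and V0: "V \<ge> 0" and R0: "R \<ge> 0" and RA: "R \<le> A" and Adef: "A = \<beta> * \<Lambda> * d^2"
    and blocks: "\<And>l::nat. l \<ge> 1 \<Longrightarrow> total \<le> (real T / real l + 1) * R + real l * G * V"
    and triv: "total \<le> real T / (2 * \<alpha>)"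
  shows "total \<le> (3 * \<beta> + 3 * sqrt (\<beta> * G) + sqrt (G / \<beta>) / (2 * \<alpha>)) * \<Lambda> * max (d * sqrt (real T * V)) (d^2)"
proof -
  define M where "M = max (d * sqrt (real T * V)) (d^2)"
  define C1 where "C1 = 3 * \<beta>"
  define C2 where "C2 = 3 * sqrt (\<beta> * G)"
  define C3 where "C3 = sqrt (G / \<beta>) / (2 * \<alpha>)"
  have C1p: "C1 \<ge> 0" and C2p: "C2 \<ge> 0" and C3p: "C3 \<ge> 0" using b0 G0 a0 by (auto simp: C1_def C2_def C3_def)
  have M1: "M \<ge> d^2" and M2: "M \<ge> d * sqrt (real T * V)" by (auto simp: M_def)
  have Mp: "M \<ge> 0" using M1 by (smt (verit) zero_le_power2)
  have LMp: "\<Lambda> * M \<ge> 0" using L1 Mp by simp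
  have A0: "A \<ge> \<beta>"
  proof -
    have "\<Lambda> * d^2 \<ge> 1 * 1" using L1 d1 by (intro mult_mono) (auto simp: one_le_power)
    hence "\<beta> * (\<Lambda> * d^2) \<ge> \<beta> * 1" using b0 by (intro mult_left_mono) auto
    thus ?thesis using Adef by (simp add: mult.assoc)
  qed
  have AM: "A \<le> \<beta> * \<Lambda> * M" using Adef M1 b0 L1 by (simp add: mult_left_mono)
  have Tp: "real T \<ge> 1" using T1 by simp
  have suff: "total \<le> X * \<Lambda> * M" if "X \<in> {C1, C2, C3}" and tX: "total \<le> X * \<Lambda> * M" for X
    using tX .
  have sum3: "total \<le> (C1 + C2 + C3) * \<Lambda> * M" if "total \<le> C1 * \<Lambda> * M \<or> total \<le> C2 * \<Lambda> * M + \<beta> * \<Lambda> * M \<or> total \<le> C3 * \<Lambda> * M"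
  proof -
    have a: "C1 * \<Lambda> * M \<le> (C1 + C2 + C3) * \<Lambda> * M" using C2p C3p LMp
      by (simp add: distrib_right mult.assoc)
    have b: "C2 * \<Lambda> * M + \<beta> * \<Lambda> * M \<le> (C1 + C2 + C3) * \<Lambda> * M"
    proof -
      have "\<beta> * (\<Lambda> * M) \<le> C1 * (\<Lambda> * M)" using LMp b0 unfolding C1_def by (intro mult_right_mono) auto
      moreover have "C3 * (\<Lambda> * M) \<ge> 0" using C3p LMp by simp
      ultimately show ?thesis by (simp add: distrib_right mult.assoc)
    qed
    have c: "C3 * \<Lambda> * M \<le> (C1 + C2 + C3) * \<Lambda> * M" using C1p C2p LMp
      by (simp add: distrib_right mult.assoc)
    show ?thesis using that a b c by linarith
  qed
  show ?thesis
    unfolding M_def[symmetric] C1_def[symmetric] C2_def[symmetric] C3_def[symmetric]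
  proof (rule sum3)
    show "total \<le> C1 * \<Lambda> * M \<or> total \<le> C2 * \<Lambda> * M + \<beta> * \<Lambda> * M \<or> total \<le> C3 * \<Lambda> * M"
    proof (cases "G * real T * V \<le> A")
      case True
      have "total \<le> (real T / real T + 1) * R + real T * G * V" using blocks[OF T1] .
      also have "\<dots> \<le> 2 * A + A" using Tp RA True by (simp add: mult.commute mult.left_commute)
      also have "\<dots> \<le> C1 * \<Lambda> * M" using AM by (simp add: C1_def)
      finally show ?thesis by simp
    next
      case False
      hence GTV: "G * real T * V > A" by simp
      have Vp: "V > 0"
      proof (rule ccontr)
        assume "\<not> V > 0" hence "V = 0" using V0 by simp
        thus False using GTV A0 b0 by simp
      qed
      have Ap: "A > 0" using A0 b0 by simp
      define x where "x = sqrt (real T * A / (G * V))"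
      have xp: "x > 0" using Tp Ap G0 Vp by (simp add: x_def)
      have x2: "x^2 = real T * A / (G * V)" using Tp Ap G0 Vp by (simp add: x_def)
      have xGV: "x * G * V = real T * A / x"
      proof -
        have "x * G * V * x = x^2 * (G * V)" by (simp add: power2_eq_square)
        also have "\<dots> = real T * A" using x2 G0 Vp by simp
        finally show ?thesis using xp by (simp add: field_simps)
      qed
      have sq: "x * G * V = sqrt (real T * A * G * V)"
      proof -
        have "(x * G * V)^2 = real T * A * G * V" using x2 G0 Vp by (simp add: power_mult_distrib power2_eq_square field_simps)
        moreover have "x * G * V \<ge> 0" using xp G0 Vp by simp
        ultimately show ?thesis by (metis real_sqrt_unique)
      qed
      have sqb: "sqrt (real T * A * G * V) \<le> sqrt (\<beta> * G) * \<Lambda> * M"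
      proof -
        have "sqrt (real T * A * G * V) = sqrt (\<beta> * G) * sqrt \<Lambda> * (d * sqrt (real T * V))"
          using d1 by (simp add: Adef real_sqrt_mult mult.commute mult.left_commute)
        also have "\<dots> \<le> sqrt (\<beta> * G) * \<Lambda> * M"
        proof (rule mult_mono)
          show "sqrt (\<beta> * G) * sqrt \<Lambda> \<le> sqrt (\<beta> * G) * \<Lambda>"
          proof (rule mult_left_mono)
            have "\<Lambda> \<le> \<Lambda>^2" using L1 by (simp add: power2_eq_square)
            hence "sqrt \<Lambda> \<le> sqrt (\<Lambda>^2)" by (rule real_sqrt_le_mono)
            thus "sqrt \<Lambda> \<le> \<Lambda>" using L1 by simp
          qed (use b0 G0 in simp)
        qed (use M2 L1 b0 G0 d1 V0 in auto)
        finally show ?thesis .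
      qed
      show ?thesis
      proof (cases "x \<ge> 1")
        case True
        define l where "l = nat (floor x)"
        have fx: "floor x \<ge> 1" using True by (simp add: one_le_floor)
        have il: "int l = floor x" using fx by (simp add: l_def)
        have l1: "l \<ge> 1" using fx il by linarith
        have lx: "real l \<le> x" using xp by (simp add: l_def)
        have xl: "x \<le> 2 * real l"
        proof -
          have "x < real l + 1" using xp by (simp add: l_def)
          thus ?thesis using l1 by simp
        qed
        have lp: "real l > 0" using l1 by simp
        have "total \<le> (real T / real l + 1) * R + real l * G * V" using blocks[OF l1] .
        also have "\<dots> \<le> (2 * real T / x + 1) * A + x * G * V"
        proof -
          have "real T / real l \<le> 2 * real T / x"
            using lp xp xl Tp by (simp add: field_simps mult_left_mono)
          hence "(real T / real l + 1) * R \<le> (2 * real T / x + 1) * A"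
            using R0 RA by (meson add_mono_thms_linordered_semiring(3) mult_mono order.trans
                zero_le_divide_iff zero_le_one of_nat_0_le_iff add_nonneg_nonneg mult_nonneg_nonneg zero_le_numeral less_imp_le xp)
          moreover have "real l * G * V \<le> x * G * V" using lx G0 Vp by (simp add: mult_right_mono)
          ultimately show ?thesis by linarith
        qed
        also have "\<dots> = 3 * sqrt (real T * A * G * V) + A"
        proof -
          have "(2 * real T / x + 1) * A = 2 * (real T * A / x) + A" by (simp add: field_simps)
          also have "\<dots> = 2 * (x * G * V) + A" using xGV by simp
          finally show ?thesis using sq by simp
        qed
        also have "\<dots> \<le> C2 * \<Lambda> * M + \<beta> * \<Lambda> * M" using sqb AM unfolding C2_def by simp
        finally show ?thesis by simp
      next
        case False
        hence x1: "x < 1" by simp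
        have "x^2 < 1" using x1 xp by (simp add: power_less_one_iff)
        hence TA: "real T * A < G * V" using x2 G0 Vp by (simp add: field_simps)
        have "real T ^ 2 \<le> real T * V * (G / \<beta>)"
        proof -
          have Ap: "A > 0" using A0 b0 by simp
          have "real T \<le> G * V / A" using TA Ap by (simp add: field_simps)
          also have "\<dots> \<le> G * V / \<beta>" using A0 b0 G0 Vp by (intro divide_left_mono) auto
          finally have "real T * real T \<le> real T * (G * V / \<beta>)" using Tp by (intro mult_left_mono) auto
          thus ?thesis by (simp add: power2_eq_square mult.commute mult.left_commute)
        qed
        hence "real T \<le> sqrt (real T * V * (G / \<beta>))" using Tp by (simp add: real_le_rsqrt)
        also have "\<dots> = sqrt (real T * V) * sqrt (G / \<beta>)" by (rule real_sqrt_mult)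
        also have "\<dots> \<le> M * sqrt (G / \<beta>)"
        proof (rule mult_right_mono)
          have "sqrt (real T * V) \<le> d * sqrt (real T * V)" using d1 V0 by (intro mult_right_mono[of 1 d, simplified]) auto
          thus "sqrt (real T * V) \<le> M" using M2 by linarith
        qed (use G0 b0 in simp)
        also have "\<dots> \<le> \<Lambda> * M * sqrt (G / \<beta>)"
          using L1 Mp G0 b0 by (intro mult_right_mono) (auto simp: mult_le_cancel_right1)
        finally have "real T / (2 * \<alpha>) \<le> \<Lambda> * M * sqrt (G / \<beta>) / (2 * \<alpha>)"
          using a0 by (simp add: divide_right_mono)
        hence "total \<le> C3 * \<Lambda> * M" using triv by (simp add: C3_def field_simps)
        thus ?thesis by simp
      qed
    qed
  qed
qed



lemma normd_nonneg: "normd d x \<ge> 0" by (simp add: normd_def sum_nonneg)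

lemma normd_sym: "normd d (\<lambda>i. x i - y i) = normd d (\<lambda>i. y i - x i)"
  unfolding normd_def by (simp add: power2_commute)

lemma normd_triangle:
  "normd d (\<lambda>i. x i - z i) \<le> normd d (\<lambda>i. x i - y i) + normd d (\<lambda>i. y i - z i)"
proof -
  have "L2_set (\<lambda>i. (x i - y i) + (y i - z i)) {..<d} \<le> L2_set (\<lambda>i. x i - y i) {..<d} + L2_set (\<lambda>i. y i - z i) {..<d}"
    by (rule L2_set_triangle_ineq)
  thus ?thesis by (simp add: normd_def L2_set_def)
qed

lemma dotd_comb: "dotd d (\<lambda>k. \<Sum>j\<in>S. w j * x j k) y = (\<Sum>j\<in>S. w j * dotd d (x j) y)"
  unfolding dotd_def by (simp add: sum_distrib_left sum_distrib_right mult.assoc sum.swap[of _ S])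

lemma dotd_scale: "dotd d (\<lambda>i. a * y i) y = a * dotd d y y"
  unfolding dotd_def by (simp add: sum_distrib_left mult.assoc)

lemma dotd_diff_scale: "dotd d (\<lambda>i. a * y i - b * y i) (\<lambda>i. c * y i) = (a - b) * c * dotd d y y"
  unfolding dotd_def by (simp add: sum_distrib_left algebra_simps)


lemma main_bound:
  fixes \<alpha> G c B L :: real and d T :: nat and v :: "nat \<Rightarrow> nat \<Rightarrow> real"
    and lo dl :: "nat \<Rightarrow> real \<Rightarrow> real" and E :: "nat \<Rightarrow> nat \<Rightarrow> (nat \<Rightarrow> real)"
    and z :: "nat \<Rightarrow> (nat \<Rightarrow> real)" and f :: "nat \<Rightarrow> (nat \<Rightarrow> real) \<Rightarrow> real"
  assumes a0: "\<alpha> > 0" and G0: "G > 0" and c0: "c > 0"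
    and hf: "f = (\<lambda>t w. lo t (dotd d w (v t)))"
    and d1: "d \<ge> 1" and T1: "T \<ge> 1" and B0: "B > 0" and L0: "L \<ge> 0"
    and der: "\<forall>t\<in>{1..T}. \<forall>s. (lo t has_real_derivative dl t s) (at s)"
    and lipd: "\<forall>t\<in>{1..T}. \<forall>s r. \<bar>dl t s - dl t r\<bar> \<le> L * \<bar>s - r\<bar>"
    and ec: "\<forall>t\<in>{1..T}. exp_concave_on d {w. \<bar>dotd d w (v t)\<bar> \<le> B} \<alpha> (f t) (\<lambda>w i. dl t (dotd d w (v t)) * v t i)"
    and lipG: "\<forall>t\<in>{1..T}. lipschitz_on_d d {w. \<bar>dotd d w (v t)\<bar> \<le> B} G (f t)"
    and Ein: "\<forall>j\<in>{1..T}. \<forall>t\<in>{j..T}. E j t \<in> {w. \<bar>dotd d w (v t)\<bar> \<le> B}"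
    and Ereg: "\<forall>j r u. 1 \<le> j \<and> j \<le> r \<and> r \<le> T \<and> u \<in> {w. \<forall>t\<in>{1..T}. \<bar>dotd d w (v t)\<bar> \<le> B} \<longrightarrow>
               (\<Sum>t=j..r. f t (E j t) - f t u) \<le> c * real d ^ 2 * (1 + ln (real T))"
    and zin: "\<forall>t\<in>{1..T}. z t \<in> {w. \<forall>t\<in>{1..T}. \<bar>dotd d w (v t)\<bar> \<le> B}"
  shows "(\<Sum>t=1..T. f t (flh_play \<alpha> f E t) - f t (z t))
          \<le> (3 * (1 / \<alpha> + c) + 3 * sqrt ((1 / \<alpha> + c) * G) + sqrt (G / (1 / \<alpha> + c)) / (2 * \<alpha>))
             * (1 + ln (real T)) * max (real d * sqrt (real T * (\<Sum>t=2..T. normd d (\<lambda>i. z t i - z (t - 1) i)))) (real d ^ 2)"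
proof -
  define w where "w = flh_w \<alpha> f E"
  define P where "P = flh_play \<alpha> f E"
  define l where "l = (\<lambda>t. f t (P t))"
  define sj where "sj = (\<lambda>j t. dotd d (E j t) (v t))"
  have fE: "f t (E j t) = lo t (sj j t)" for j t by (simp add: hf sj_def)
  have dP: "dotd d (P t) (v t) = (\<Sum>j=1..t. w t j * sj j t)" for t
    unfolding P_def flh_play_def w_def sj_def by (rule dotd_comb)
  have lP: "l t = lo t (\<Sum>j=1..t. w t j * sj j t)" for t by (simp add: l_def hf dP)
  have sjB: "sj j t \<in> {-B..B}" if "j \<in> {1..t}" "t \<in> {1..T}" for j t
  proof -
    have "j \<in> {1..T}" "t \<in> {j..T}" using that by auto
    hence "\<bar>dotd d (E j t) (v t)\<bar> \<le> B" using Ein by blast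
    thus ?thesis by (auto simp: sj_def abs_le_iff)
  qed
  have PB: "\<bar>dotd d (P t) (v t)\<bar> \<le> B" if t: "t \<in> {1..T}" for t
  proof -
    have b: "(\<forall>j\<in>{1..t}. w t j > 0) \<and> (\<Sum>j=1..t. w t j) = 1"
      unfolding w_def by (rule flh_basic) (use t in auto)
    have "\<bar>\<Sum>j=1..t. w t j * sj j t\<bar> \<le> (\<Sum>j=1..t. \<bar>w t j * sj j t\<bar>)" by (rule sum_abs)
    also have "\<dots> \<le> (\<Sum>j=1..t. w t j * B)"
    proof (rule sum_mono)
      fix j assume j: "j \<in> {1..t}"
      have "\<bar>sj j t\<bar> \<le> B" using sjB[OF j t] by auto
      moreover have "w t j > 0" using b j by blast
      ultimately show "\<bar>w t j * sj j t\<bar> \<le> w t j * B" by (simp add: abs_mult mult_left_mono)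
    qed
    also have "\<dots> = B" using b by (simp add: sum_distrib_right[symmetric])
    finally show ?thesis by (simp add: dP)
  qed
  have mix: "(\<Sum>j=1..t. w t j * exp (- \<alpha> * f t (E j t))) \<le> exp (- \<alpha> * l t)" if t: "t \<in> {1..T}" for t
  proof -
    have b: "(\<forall>j\<in>{1..t}. w t j > 0) \<and> (\<Sum>j=1..t. w t j) = 1"
      unfolding w_def by (rule flh_basic) (use t in auto)
    define nv where "nv = dotd d (v t) (v t)"
    have nv0: "nv \<ge> 0" by (simp add: nv_def dotd_def sum_nonneg)
    show ?thesis
    proof (cases "nv > 0")
      case True
      have cond: "lo t s' \<ge> lo t s + dl t s * (s' - s) + \<alpha> / 2 * (dl t s * (s' - s))^2"
        if s: "s \<in> {-B..B}" and s': "s' \<in> {-B..B}" for s s'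
      proof -
        define u where "u = (\<lambda>i. s / nv * v t i)"
        define u' where "u' = (\<lambda>i. s' / nv * v t i)"
        have "dotd d u (v t) = s / nv * nv" unfolding u_def nv_def by (rule dotd_scale)
        hence du: "dotd d u (v t) = s" using True by simp
        have "dotd d u' (v t) = s' / nv * nv" unfolding u'_def nv_def by (rule dotd_scale)
        hence du': "dotd d u' (v t) = s'" using True by simp
        have uK: "u \<in> {w. \<bar>dotd d w (v t)\<bar> \<le> B}" using du s by auto
        have uK': "u' \<in> {w. \<bar>dotd d w (v t)\<bar> \<le> B}" using du' s' by auto
        have e: "f t u' \<ge> f t u + dotd d (\<lambda>i. u' i - u i) (\<lambda>i. dl t (dotd d u (v t)) * v t i)
                 + \<alpha> / 2 * (dotd d (\<lambda>i. u' i - u i) (\<lambda>i. dl t (dotd d u (v t)) * v t i))^2"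
          using ec t uK uK' unfolding exp_concave_on_def by blast
        have dd: "dotd d (\<lambda>i. u' i - u i) (\<lambda>i. dl t (dotd d u (v t)) * v t i) = dl t s * (s' - s)"
        proof -
          have "dotd d (\<lambda>i. u' i - u i) (\<lambda>i. dl t (dotd d u (v t)) * v t i)
                = (s' / nv - s / nv) * dl t s * nv"
            unfolding du unfolding u_def u'_def nv_def by (rule dotd_diff_scale)
          also have "\<dots> = dl t s * (s' - s)" using True by (simp add: field_simps)
          finally show ?thesis .
        qed
        show ?thesis using e unfolding dd by (simp add: hf du du')
      qed
      have cv: "convex_on {-B..B} (\<lambda>s. - exp (- \<alpha> * lo t s))"
        by (rule concave_exp[OF a0 L0 _ _ _ cond]) (use B0 der lipd t in auto)
      have "- exp (- \<alpha> * lo t (\<Sum>j\<in>{1..t}. w t j *\<^sub>R sj j t)) \<le> (\<Sum>j\<in>{1..t}. w t j * - exp (- \<alpha> * lo t (sj j t)))"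
      proof (rule convex_on_sum[OF _ _ cv])
        show "\<And>i. i \<in> {1..t} \<Longrightarrow> 0 \<le> w t i" using b by (meson less_imp_le)
        show "\<And>i. i \<in> {1..t} \<Longrightarrow> sj i t \<in> {-B..B}" using sjB t by blast
      qed (use b t in auto)
      hence "(\<Sum>j\<in>{1..t}. w t j * exp (- \<alpha> * lo t (sj j t))) \<le> exp (- \<alpha> * lo t (\<Sum>j\<in>{1..t}. w t j * sj j t))"
        by (simp add: sum_negf)
      thus ?thesis by (simp add: fE lP)
    next
      case False
      hence "nv = 0" using nv0 by simp
      hence vz: "\<forall>i\<in>{..<d}. v t i * v t i = 0" unfolding nv_def dotd_def
        by (subst sum_nonneg_eq_0_iff[symmetric]) auto
      have d0: "dotd d y (v t) = 0" for y unfolding dotd_def using vz by simp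
      have "(\<Sum>j=1..t. w t j * exp (- \<alpha> * f t (E j t))) = (\<Sum>j=1..t. w t j) * exp (- \<alpha> * lo t 0)"
        by (simp add: hf d0 sum_distrib_right)
      also have "\<dots> = exp (- \<alpha> * l t)" using b by (simp add: l_def hf d0)
      finally show ?thesis by simp
    qed
  qed
  have regret: "\<alpha> * (\<Sum>t=j..r. l t - f t (E j t)) \<le> ln (real r + 1)" if "1 \<le> j" "j \<le> r" "r \<le> T" for j r
    using flh_regret[where f = f and x = E and l = l and T = T and \<zeta> = \<alpha>, OF a0 mix[unfolded w_def] that] by simp

  have zK: "z a \<in> {w. \<bar>dotd d w (v t)\<bar> \<le> B}" if "a \<in> {1..T}" "t \<in> {1..T}" for a t
    using zin that by blast
  have PK: "P t \<in> {w. \<bar>dotd d w (v t)\<bar> \<le> B}" if "t \<in> {1..T}" for t using PB[OF that] by simp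
  have triv_t: "l t - f t (z t) \<le> 1 / (2 * \<alpha>)" if t: "t \<in> {1..T}" for t
  proof -
    define a where "a = dotd d (\<lambda>i. z t i - P t i) (\<lambda>i. dl t (dotd d (P t) (v t)) * v t i)"
    have e: "f t (z t) \<ge> f t (P t) + a + \<alpha> / 2 * a^2"
      using ec t PK[OF t] zK[OF t t] unfolding exp_concave_on_def a_def by blast
    have "\<alpha> / 2 * a^2 + a + 1 / (2 * \<alpha>) = (\<alpha> * a + 1)^2 / (2 * \<alpha>)"
      using a0 by (simp add: field_simps power2_eq_square)
    also have "\<dots> \<ge> 0" using a0 by simp
    finally show ?thesis using e by (simp add: l_def)
  qed
  have triv: "(\<Sum>t=1..T. l t - f t (z t)) \<le> real T / (2 * \<alpha>)"
  proof -
    have "(\<Sum>t=1..T. l t - f t (z t)) \<le> (\<Sum>t=1..T. 1 / (2 * \<alpha>))" by (rule sum_mono) (use triv_t in auto)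
    thus ?thesis by simp
  qed
  define \<Lambda> where "\<Lambda> = 1 + ln (real T)"
  have L1: "\<Lambda> \<ge> 1" using T1 by (simp add: \<Lambda>_def)
  define R where "R = \<Lambda> / \<alpha> + c * real d ^ 2 * \<Lambda>"
  have R0: "R \<ge> 0" using L1 a0 c0 by (simp add: R_def)
  define W where "W = (\<lambda>a b. \<Sum>t\<in>{a<..b}. normd d (\<lambda>i. z t i - z (t - 1) i))"
  have Wnn: "W a b \<ge> 0" for a b unfolding W_def by (rule sum_nonneg) (simp add: normd_nonneg)
  have Wmono: "W a t \<le> W a b" if "t \<le> b" for a t b
    unfolding W_def by (rule sum_mono2) (use that in \<open>auto simp: normd_nonneg\<close>)
  have dist: "normd d (\<lambda>i. z a i - z t i) \<le> W a t" if "a \<le> t" for a t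
    using that
  proof (induction t rule: dec_induct)
    case base
    have "normd d (\<lambda>i. z a i - z a i) = 0" by (simp add: normd_def)
    thus ?case using Wnn[of a a] by simp
  next
    case (step n)
    have "{a<..Suc n} = insert (Suc n) {a<..n}" using step.hyps by auto
    hence WS: "W a (Suc n) = normd d (\<lambda>i. z (Suc n) i - z n i) + W a n" unfolding W_def by simp
    have "normd d (\<lambda>i. z a i - z (Suc n) i) \<le> normd d (\<lambda>i. z a i - z n i) + normd d (\<lambda>i. z n i - z (Suc n) i)"
      by (rule normd_triangle)
    also have "normd d (\<lambda>i. z n i - z (Suc n) i) = normd d (\<lambda>i. z (Suc n) i - z n i)" by (rule normd_sym)
    finally show ?case using step.IH WS by simp
  qed
  have lnb: "ln (real b + 1) \<le> \<Lambda>" if "1 \<le> b" "b \<le> T" for b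
  proof -
    have "real b + 1 \<le> 2 * real T" using that by simp
    hence "ln (real b + 1) \<le> ln (2 * real T)" using that by (subst ln_le_cancel_iff) auto
    also have "\<dots> = ln 2 + ln (real T)" using T1 by (simp add: ln_mult)
    also have "\<dots> \<le> \<Lambda>" using ln_2_less_1 by (simp add: \<Lambda>_def)
    finally show ?thesis .
  qed
  have block: "(\<Sum>t=a..b. l t - f t (z t)) \<le> R + real (Suc b - a) * G * W a b"
    if ab: "1 \<le> a" "a \<le> b" "b \<le> T" for a b
  proof -
    have aT: "a \<in> {1..T}" using ab by auto
    have s1: "(\<Sum>t=a..b. l t - f t (E a t)) \<le> \<Lambda> / \<alpha>"
    proof -
      have "\<alpha> * (\<Sum>t=a..b. l t - f t (E a t)) \<le> \<Lambda>" using regret[OF ab] lnb[of b] ab by linarith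
      thus ?thesis using a0 by (simp add: pos_le_divide_eq mult.commute)
    qed
    have s2: "(\<Sum>t=a..b. f t (E a t) - f t (z a)) \<le> c * real d ^ 2 * \<Lambda>"
      using Ereg ab zin aT unfolding \<Lambda>_def by blast
    have s3: "(\<Sum>t=a..b. f t (z a) - f t (z t)) \<le> (\<Sum>t=a..b. G * W a b)"
    proof (rule sum_mono)
      fix t assume t: "t \<in> {a..b}"
      hence tT: "t \<in> {1..T}" using ab by auto
      have "\<bar>f t (z a) - f t (z t)\<bar> \<le> G * normd d (\<lambda>i. z a i - z t i)"
        using lipG tT zK[OF aT tT] zK[OF tT tT] unfolding lipschitz_on_d_def by blast
      also have "\<dots> \<le> G * W a b"
        using dist[of a t] Wmono[of t b a] t G0 by (intro mult_left_mono) auto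
      finally show "f t (z a) - f t (z t) \<le> G * W a b" by simp
    qed
    have s3': "(\<Sum>t=a..b. G * W a b) = real (Suc b - a) * G * W a b" by simp
    have "(\<Sum>t=a..b. l t - f t (z t)) = (\<Sum>t=a..b. l t - f t (E a t)) + (\<Sum>t=a..b. f t (E a t) - f t (z a))
            + (\<Sum>t=a..b. f t (z a) - f t (z t))" by (simp add: sum_subtractf)
    thus ?thesis using s1 s2 s3 s3' unfolding R_def by linarith
  qed
  have blocks: "(\<Sum>t=1..N. l t - f t (z t)) \<le> (real N / real l0 + 1) * R + real l0 * G * W 1 N"
    if l0: "l0 \<ge> 1" and NT: "N \<le> T" for l0 N
    using NT
  proof (induction N rule: less_induct)
    case (less N)
    show ?case
    proof (cases "N = 0")
      case True
      have "0 \<le> (real N / real l0 + 1) * R + real l0 * G * W 1 N" using R0 G0 Wnn[of 1 N] by simp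
      thus ?thesis using True by simp
    next
      case False
      show ?thesis
      proof (cases "N \<le> l0")
        case True
        have "(\<Sum>t=1..N. l t - f t (z t)) \<le> R + real (Suc N - 1) * G * W 1 N"
          by (rule block) (use False less.prems in auto)
        also have "\<dots> \<le> (real N / real l0 + 1) * R + real l0 * G * W 1 N"
        proof -
          have "real N * (G * W 1 N) \<le> real l0 * (G * W 1 N)" using True G0 Wnn[of 1 N] by (intro mult_right_mono) auto
          moreover have "R \<le> (real N / real l0 + 1) * R" using R0 by (simp add: distrib_right)
          ultimately show ?thesis by (simp add: mult.assoc)
        qed
        finally show ?thesis .
      next
        case False2: False
        define m where "m = N - l0"
        have m1: "m \<ge> 1" "m < N" and Nm: "N = m + l0" using False2 l0 by (auto simp: m_def)
        have IH: "(\<Sum>t=1..m. l t - f t (z t)) \<le> (real m / real l0 + 1) * R + real l0 * G * W 1 m"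
          using less.IH[OF m1(2)] less.prems m1 by simp
        have bl: "(\<Sum>t=Suc m..N. l t - f t (z t)) \<le> R + real (Suc N - Suc m) * G * W (Suc m) N"
          by (rule block) (use m1 less.prems Nm in auto)
        have sp: "(\<Sum>t=1..N. l t - f t (z t)) = (\<Sum>t=1..m. l t - f t (z t)) + (\<Sum>t=Suc m..N. l t - f t (z t))"
          unfolding Nm using sum.ub_add_nat[of 1 m "\<lambda>t. l t - f t (z t)" l0] m1 by simp
        have Wsp: "W 1 N = W 1 m + W m N"
        proof -
          have "{1<..N} = {1<..m} \<union> {m<..N}" using m1 by auto
          thus ?thesis unfolding W_def by (simp add: sum.union_disjoint ivl_disj_int)
        qed
        have WS: "W (Suc m) N \<le> W m N" unfolding W_def by (rule sum_mono2) (auto simp: normd_nonneg)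
        have "real l0 * G * W (Suc m) N \<le> real l0 * G * W m N" using WS G0 by (intro mult_left_mono) auto
        moreover have bl': "(\<Sum>t=Suc m..N. l t - f t (z t)) \<le> R + real l0 * G * W (Suc m) N"
          using bl Nm by simp
        moreover have "(real m / real l0 + 1) * R + R = (real N / real l0 + 1) * R"
          using l0 Nm by (simp add: field_simps)
        moreover have "real l0 * G * W 1 N = real l0 * G * W 1 m + real l0 * G * W m N" using Wsp by (simp add: algebra_simps)
        ultimately show ?thesis using IH sp by linarith
      qed
    qed
  qed
  have V: "(\<Sum>t=2..T. normd d (\<lambda>i. z t i - z (t - 1) i)) = W 1 T"
  proof -
    have "{1<..T} = {2..T}" by auto
    thus ?thesis unfolding W_def by simp
  qed
  have "(\<Sum>t=1..T. l t - f t (z t)) \<le> (3 * (1 / \<alpha> + c) + 3 * sqrt ((1 / \<alpha> + c) * G) + sqrt (G / (1 / \<alpha> + c)) / (2 * \<alpha>))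
             * \<Lambda> * max (real d * sqrt (real T * W 1 T)) (real d ^ 2)"
  proof (rule final_arith[where R = R and A = "(1 / \<alpha> + c) * \<Lambda> * real d ^ 2"])
    show "0 < 1 / \<alpha> + c" using a0 c0 by (simp add: add_pos_pos)
    show "R \<le> (1 / \<alpha> + c) * \<Lambda> * real d ^ 2"
    proof -
      have "\<Lambda> / \<alpha> \<le> (\<Lambda> / \<alpha>) * real d ^ 2"
      proof -
        have "0 \<le> \<Lambda> / \<alpha>" using L1 a0 by simp
        moreover have "1 \<le> real d ^ 2" using d1 by (simp add: one_le_power)
        ultimately show ?thesis using mult_left_mono[of 1 "real d ^ 2" "\<Lambda> / \<alpha>"] by simp
      qed
      hence "\<Lambda> / \<alpha> \<le> 1 / \<alpha> * \<Lambda> * real d ^ 2" by simp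
      thus ?thesis unfolding R_def by (simp add: algebra_simps)
    qed
    show "\<And>k. 1 \<le> k \<Longrightarrow> (\<Sum>t=1..T. l t - f t (z t)) \<le> (real T / real k + 1) * R + real k * G * W 1 T"
      using blocks by simp
  qed (use a0 G0 L1 d1 T1 Wnn R0 triv in auto)
  thus ?thesis unfolding V \<Lambda>_def l_def P_def by simp
qed


theorem theorem10:
  fixes \<alpha> G c :: real
  assumes "\<alpha> > 0" and "G > 0" and "c > 0"
  shows "\<exists>C>0. \<exists>k::nat. \<forall>(d::nat) (T::nat) (B::real) (v::nat \<Rightarrow> nat \<Rightarrow> real)
            (lo::nat \<Rightarrow> real \<Rightarrow> real) (dl::nat \<Rightarrow> real \<Rightarrow> real) (L::real)
            (E::nat \<Rightarrow> nat \<Rightarrow> (nat \<Rightarrow> real)) (z::nat \<Rightarrow> (nat \<Rightarrow> real)).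
     let f = (\<lambda>t w. lo t (dotd d w (v t)));
         gf = (\<lambda>t w. (\<lambda>i. dl t (dotd d w (v t)) * v t i));
         Kt = (\<lambda>t. {w. \<bar>dotd d w (v t)\<bar> \<le> B});
         K = {w. \<forall>t\<in>{1..T}. \<bar>dotd d w (v t)\<bar> \<le> B};
         V = (\<Sum>t=2..T. normd d (\<lambda>i. z t i - z (t - 1) i))
     in (d \<ge> 1 \<and> T \<ge> 1 \<and> B > 0 \<and> L \<ge> 0
         \<and> (\<forall>t\<in>{1..T}. \<forall>s. (lo t has_real_derivative dl t s) (at s))
         \<and> (\<forall>t\<in>{1..T}. \<forall>s r. \<bar>dl t s - dl t r\<bar> \<le> L * \<bar>s - r\<bar>)
         \<and> (\<forall>t\<in>{1..T}. exp_concave_on d (Kt t) \<alpha> (f t) (gf t))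
         \<and> (\<forall>t\<in>{1..T}. lipschitz_on_d d (Kt t) G (f t))
         \<and> (\<forall>j\<in>{1..T}. \<forall>t\<in>{j..T}. E j t \<in> Kt t)
         \<and> (\<forall>j r u. 1 \<le> j \<and> j \<le> r \<and> r \<le> T \<and> u \<in> K \<longrightarrow>
               (\<Sum>t=j..r. f t (E j t) - f t u) \<le> c * real d ^ 2 * (1 + ln (real T)))
         \<and> (\<forall>t\<in>{1..T}. z t \<in> K))
        \<longrightarrow> (\<Sum>t=1..T. f t (flh_play \<alpha> f E t) - f t (z t))
              \<le> C * (1 + ln (real T)) ^ k * max (real d * sqrt (real T * V)) (real d ^ 2)"
  proof -
  define \<beta> where "\<beta> = 1 / \<alpha> + c"
  define Cst where "Cst = 3 * \<beta> + 3 * sqrt (\<beta> * G) + sqrt (G / \<beta>) / (2 * \<alpha>)"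
  have b0: "\<beta> > 0" using assms by (simp add: \<beta>_def add_pos_pos)
  have Cpos: "Cst > 0"
  proof -
    have "sqrt (\<beta> * G) \<ge> 0" "sqrt (G / \<beta>) / (2 * \<alpha>) \<ge> 0" using b0 assms by auto
    thus ?thesis using b0 unfolding Cst_def by linarith
  qed
  show ?thesis
    apply (rule exI[where x = Cst])
    apply (rule conjI[OF Cpos])
    apply (rule exI[where x = "1::nat"])
    apply (intro allI)
    subgoal for d T B v lo dl L E z
      unfolding Let_def
      apply (rule impI)
      apply (elim conjE)
      apply (unfold power_one_right Cst_def \<beta>_def)
      apply (rule main_bound[where f = "\<lambda>t w. lo t (dotd d w (v t))" and d = d and T = T and B = B
              and L = L and v = v and lo = lo and dl = dl and E = E and z = z, OF assms refl])
      apply assumption+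
      done
    done
qed

end
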